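(* Consider an ontological model that reproduces the quantum predictions for a quantum system with Hilbert space $\mathbb{C}^3$, and suppose there is a constant $k$ such that $\omega_C(\mu_\psi,\mu_\phi)\geq k\,\omega_Q(\psi,\phi)$ for all pure states $\ket{\psi},\ket{\phi}$. Then $k\leq 0.95$. In particular, no maximally $\psi$-epistemic ontological model reproduces the quantum predictions for $d=3$.
   Context: An ontological model for a quantum system with Hilbert space $\mathbb{C}^d$ consists of: a measure space $\Lambda$ of "ontic states" (with measure $\mathrm{d}\lambda$); for every pure state $\ket{\psi}$, a probability density $\mu_\psi$ on $\Lambda$; and for every projective measurement $M$ with outcomes $f$ (corresponding to orthogonal projectors $P_f$ summing to the identity), response functions $\xi_M(f|\lambda)\geq 0$ with $\sum_f \xi_M(f|\lambda)=1$ for all $\lambda$. The model reproduces the quantum predictions if $\int_\Lambda \xi_M(f|\lambda)\mu_\psi(\lambda)\,\mathrm{d}\lambda = \bra{\psi}P_f\ket{\psi}$ for all pure states $\ket{\psi}$, all projective measurements $M$ and outcomes $f$. The classical overlap of densities $p,q$ is $\omega_C(p,q)=\int\min\{p(x),q(x)\}\,\mathrm{d}x$; the quantum overlap of pure states is $\omega_Q(\psi,\phi)=1-\sqrt{1-|\braket{\psi|\phi}|^2}$. The model is maximally $\psi$-epistemic if $\omega_C(\mu_\psi,\mu_\phi)=\omega_Q(\psi,\phi)$ for all pairs of pure states. *)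

theory Defs
  imports "HOL-Probability.Probability"
begin

definition braket :: "complex ^ 'n \<Rightarrow> complex ^ 'n \<Rightarrow> complex" where
  "braket \<psi> \<phi> = (\<Sum>i\<in>UNIV. cnj (\<psi> $ i) * \<phi> $ i)"

definition pure_state :: "complex ^ 'n \<Rightarrow> bool" where
  "pure_state \<psi> \<longleftrightarrow> braket \<psi> \<psi> = 1"

definition adjoint_mat :: "complex ^ 'n ^ 'n \<Rightarrow> complex ^ 'n ^ 'n" where
  "adjoint_mat P = (\<chi> i j. cnj (P $ j $ i))"

definition orth_projector :: "complex ^ 'n ^ 'n \<Rightarrow> bool" where
  "orth_projector P \<longleftrightarrow> adjoint_mat P = P \<and> P ** P = P"

definition projective_measurement :: "(complex ^ 'n ^ 'n) list \<Rightarrow> bool" where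
  "projective_measurement Ps \<longleftrightarrow>
     (\<forall>f < length Ps. orth_projector (Ps ! f)) \<and>
     (\<forall>f < length Ps. \<forall>g < length Ps. f \<noteq> g \<longrightarrow> Ps ! f ** Ps ! g = 0) \<and>
     sum_list Ps = mat 1"

definition born :: "complex ^ 'n \<Rightarrow> complex ^ 'n ^ 'n \<Rightarrow> real" where
  "born \<psi> P = Re (braket \<psi> (P *v \<psi>))"

definition reproducing_ontological_model ::
  "'l measure \<Rightarrow> (complex ^ 'n \<Rightarrow> 'l \<Rightarrow> real) \<Rightarrow>
   ((complex ^ 'n ^ 'n) list \<Rightarrow> nat \<Rightarrow> 'l \<Rightarrow> real) \<Rightarrow> bool" where
  "reproducing_ontological_model M \<mu> \<xi> \<longleftrightarrow>
     (\<forall>\<psi>. pure_state \<psi> \<longrightarrow>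
        \<mu> \<psi> \<in> borel_measurable M \<and> (\<forall>l\<in>space M. 0 \<le> \<mu> \<psi> l) \<and>
        integrable M (\<mu> \<psi>) \<and> (\<integral>l. \<mu> \<psi> l \<partial>M) = 1) \<and>
     (\<forall>Ps. projective_measurement Ps \<longrightarrow>
        (\<forall>f < length Ps. \<xi> Ps f \<in> borel_measurable M \<and> (\<forall>l\<in>space M. 0 \<le> \<xi> Ps f l)) \<and>
        (\<forall>l\<in>space M. (\<Sum>f<length Ps. \<xi> Ps f l) = 1)) \<and>
     (\<forall>\<psi> Ps f. pure_state \<psi> \<longrightarrow> projective_measurement Ps \<longrightarrow> f < length Ps \<longrightarrow>
        (\<integral>l. \<xi> Ps f l * \<mu> \<psi> l \<partial>M) = born \<psi> (Ps ! f))"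

definition classical_overlap :: "'l measure \<Rightarrow> ('l \<Rightarrow> real) \<Rightarrow> ('l \<Rightarrow> real) \<Rightarrow> real" where
  "classical_overlap M p q = (\<integral>x. min (p x) (q x) \<partial>M)"

definition quantum_overlap :: "complex ^ 'n \<Rightarrow> complex ^ 'n \<Rightarrow> real" where
  "quantum_overlap \<psi> \<phi> = 1 - sqrt (1 - (cmod (braket \<psi> \<phi>))\<^sup>2)"

definition maximally_psi_epistemic ::
  "'l measure \<Rightarrow> (complex ^ 'n \<Rightarrow> 'l \<Rightarrow> real) \<Rightarrow> bool" where
  "maximally_psi_epistemic M \<mu> \<longleftrightarrow>
     (\<forall>\<psi> \<phi>. pure_state \<psi> \<longrightarrow> pure_state \<phi> \<longrightarrow>
        classical_overlap M (\<mu> \<psi>) (\<mu> \<phi>) = quantum_overlap \<psi> \<phi>)"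

end

theory Submission
  imports Defs
begin


definition w :: complex where "w = Complex (-1/2) (sqrt 3 / 2)"
definition wb :: complex where "wb = Complex (-1/2) (- sqrt 3 / 2)"

lemma s3: "sqrt 3 * sqrt 3 = (3::real)" by simp

lemma w_simps: "w * w = wb" "wb * wb = w" "w * wb = 1" "wb * w = 1" "cnj w = wb" "cnj wb = w"
  "1 + w + wb = 0"
  by (simp_all add: w_def wb_def complex_eq_iff field_simps)

lemma braket3: "braket (u::complex^3) v = cnj (u$1) * v$1 + cnj (u$2) * v$2 + cnj (u$3) * v$3"
  by (simp add: braket_def sum_3)

definition sv :: "(complex^3) list" where
 "sv = [vector [0,1,-1], vector [0,1,-w], vector [0,1,-wb],
        vector [-1,0,1], vector [-w,0,1], vector [-wb,0,1],
        vector [1,-1,0], vector [1,-w,0], vector [1,-wb,0]]"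

definition bv :: "(complex^3) list list" where
 "bv = [[vector [1,0,0], vector [0,1,0], vector [0,0,1]],
        [vector [1,1,1], vector [1,w,wb], vector [1,wb,w]],
        [vector [1,1,w], vector [1,w,1], vector [1,wb,wb]],
        [vector [1,1,wb], vector [1,w,w], vector [1,wb,1]]]"

definition tbls :: "nat list list list" where
 "tbls = [[[0,1,2],[3,4,5],[6,7,8]],[[0,3,6],[1,4,7],[2,5,8]],
          [[1,5,6],[2,3,7],[0,4,8]],[[2,4,6],[0,5,7],[1,3,8]]]"

lemma orth_tbl: "B < 4 \<Longrightarrow> f < 3 \<Longrightarrow> t \<in> set (tbls!B!f) \<Longrightarrow> braket (bv!B!f) (sv!t) = 0"
  apply (simp add: tbls_def less_Suc_eq numeral_eq_Suc)
  apply (elim disjE; simp; elim disjE; simp add: bv_def sv_def braket3 w_simps)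
  done



definition pr :: "real \<Rightarrow> complex^3 \<Rightarrow> complex^3^3" where
  "pr c v = (\<chi> i j. of_real c * v$i * cnj (v$j))"

lemma pr_mult: "pr c u ** pr d v = (\<chi> i j. of_real c * of_real d * u$i * cnj (v$j) * braket u v)"
  unfolding pr_def matrix_matrix_mult_def braket_def vec_eq_iff
  apply (simp add: sum_distrib_left)
  apply (intro allI sum.cong refl)
  by (simp add: mult_ac)

lemma pr_orth: "braket u v = 0 \<Longrightarrow> pr c u ** pr d v = 0"
  by (simp add: pr_mult vec_eq_iff)

lemma pr_proj: "of_real c * braket v v = 1 \<Longrightarrow> orth_projector (pr c v)"
  unfolding orth_projector_def
proof
  assume h: "of_real c * braket v v = 1"
  show "adjoint_mat (pr c v) = pr c v"
    by (simp add: adjoint_mat_def pr_def vec_eq_iff mult_ac)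
  have "of_real c * of_real c * v$i * cnj (v$j) * braket v v = of_real c * v$i * cnj (v$j)" for i j
  proof -
    have "of_real c * of_real c * v$i * cnj (v$j) * braket v v = (of_real c * braket v v) * (of_real c * v$i * cnj (v$j))"
      by (simp add: mult_ac)
    then show ?thesis using h by simp
  qed
  then show "pr c v ** pr c v = pr c v"
    unfolding pr_mult by (simp add: pr_def vec_eq_iff)
qed

lemma pr_born: "braket v \<psi> = 0 \<Longrightarrow> born \<psi> (pr c v) = 0"
proof -
  assume h: "braket v \<psi> = 0"
  have "(pr c v *v \<psi>) $ i = of_real c * v$i * braket v \<psi>" for i
    unfolding pr_def matrix_vector_mult_def braket_def
    by (simp add: sum_distrib_left mult_ac)
  then have "pr c v *v \<psi> = 0" using h by (simp add: vec_eq_iff)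
  then show ?thesis by (simp add: born_def braket_def)
qed

definition bsc :: "nat \<Rightarrow> real" where "bsc B = (if B = 0 then 1 else 1/3)"
definition meas :: "nat \<Rightarrow> (complex^3^3) list" where "meas B = map (pr (bsc B)) (bv!B)"

lemma meas_len: "B < 4 \<Longrightarrow> length (meas B) = 3"
  by (simp add: meas_def bv_def less_Suc_eq numeral_eq_Suc) (elim disjE; simp)


lemma bv_len: "B < 4 \<Longrightarrow> length (bv!B) = 3"
  by (simp add: bv_def less_Suc_eq numeral_eq_Suc) (elim disjE; simp)

lemma set18: "{1..8::nat} = {1,2,3,4,5,6,7,8}" by auto

definition s :: "nat \<Rightarrow> complex^3" where "s t = of_real (1 / sqrt 2) *s (sv!t)"

lemma braket_scale: "braket (c *s u) (d *s v) = cnj c * d * braket u v"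
  unfolding braket_def by (simp add: sum_distrib_left mult_ac)

lemma braket_scale_r: "braket u (d *s v) = d * braket u v"
  unfolding braket_def by (simp add: sum_distrib_left mult_ac)

lemma h2: "(1 / complex_of_real (sqrt 2))^2 = 1/2"
proof -
  have "(complex_of_real (sqrt 2))^2 = 2" by (simp flip: of_real_power)
  then show ?thesis by (simp add: power_divide)
qed

lemma sv_norm: "t < 9 \<Longrightarrow> braket (sv!t) (sv!t) = 2"
  apply (simp add: less_Suc_eq numeral_eq_Suc)
  apply (elim disjE)
  apply (simp_all add: sv_def braket3 w_simps)
  done

lemma s_pure: "t < 9 \<Longrightarrow> pure_state (s t)"
  unfolding pure_state_def s_def braket_scale using sv_norm[of t]
  by (simp add: power2_eq_square[symmetric] h2)

lemma s_orth: "B < 4 \<Longrightarrow> f < 3 \<Longrightarrow> t \<in> set (tbls!B!f) \<Longrightarrow> braket (bv!B!f) (s t) = 0"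
  using orth_tbl[of B f t] unfolding s_def braket_scale_r by simp

lemma sv_ov: "j \<in> {1..8} \<Longrightarrow> (cmod (braket (sv!0) (sv!j)))\<^sup>2 = 1"
  unfolding set18
  apply (simp)
  apply (elim disjE)
  apply (simp_all add: sv_def braket3 w_simps cmod_power2 w_def wb_def power_divide)
  done

lemma s_ov: "j \<in> {1..8} \<Longrightarrow> quantum_overlap (s 0) (s j) = 1 - sqrt 3 / 2"
proof -
  assume j: "j \<in> {1..8}"
  have eq: "braket (s 0) (s j) = of_real (1/2) * braket (sv!0) (sv!j)"
    unfolding s_def braket_scale by (simp add: power2_eq_square[symmetric] h2)
  have c: "cmod (braket (s 0) (s j)) = 1/2 * cmod (braket (sv!0) (sv!j))"
    unfolding eq norm_mult norm_of_real by simp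
  have "(cmod (braket (s 0) (s j)))\<^sup>2 = 1/4"
    unfolding c power_mult_distrib sv_ov[OF j] by (simp add: power_divide)
  then have "quantum_overlap (s 0) (s j) = 1 - sqrt (3/4)"
    unfolding quantum_overlap_def by simp
  also have "sqrt (3/4) = sqrt 3 / 2" by (simp add: real_sqrt_divide)
  finally show ?thesis .
qed
lemma bv_norm: "B < 4 \<Longrightarrow> f < 3 \<Longrightarrow> of_real (bsc B) * braket (bv!B!f) (bv!B!f) = 1"
  apply (simp add: less_Suc_eq numeral_eq_Suc)
  apply (elim disjE)
  apply (simp_all add: bv_def bsc_def braket3 w_simps)
  done
lemma bv_orth: "B < 4 \<Longrightarrow> f < 3 \<Longrightarrow> g < 3 \<Longrightarrow> f \<noteq> g \<Longrightarrow> braket (bv!B!f) (bv!B!g) = 0"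
  apply (simp add: less_Suc_eq numeral_eq_Suc)
  apply (elim disjE)
  apply (simp_all add: bv_def braket3 w_simps)
  apply (simp_all add: w_def wb_def complex_eq_iff)
  done
lemma mat1_3: "(mat 1 :: complex^3^3) = (\<chi> i j. if i = j then 1 else 0)"
  by (simp add: mat_def)
lemma meas_sum: "B < 4 \<Longrightarrow> sum_list (meas B) = mat 1"
  apply (simp add: less_Suc_eq numeral_eq_Suc)
  apply (elim disjE)
  apply (simp_all add: meas_def bv_def bsc_def pr_def mat1_3 vec_eq_iff forall_3 w_simps)
  apply (simp_all add: w_def wb_def complex_eq_iff)
  done
lemma meas_pm: "B < 4 \<Longrightarrow> projective_measurement (meas B)"
  unfolding projective_measurement_def
  using meas_len[of B] bv_len[of B]
  by (auto simp: meas_def meas_sum[unfolded meas_def] intro!: pr_proj bv_norm pr_orth bv_orth)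


lemma ex4: "(\<exists>B<(4::nat). P B) = (P 0 \<or> P 1 \<or> P 2 \<or> P 3)"
  by (auto simp: less_Suc_eq numeral_eq_Suc)
lemma all3: "(\<forall>f<(3::nat). P f) = (P 0 \<and> P 1 \<and> P 2)"
  by (auto simp: less_Suc_eq numeral_eq_Suc)
lemma comb: "j \<in> {1..8::nat} \<Longrightarrow> k \<in> {1..8} \<Longrightarrow> j \<noteq> k \<Longrightarrow>
   \<exists>B<4. \<forall>f<3. \<exists>t\<in>{0,j,k}. t \<in> set (tbls!B!f)"
  unfolding ex4 all3 set18
  apply (simp add: tbls_def)
  apply (elim disjE)
  apply simp_all
  done

lemma comb_ineq:
  fixes c :: "nat \<Rightarrow> real"
  assumes "finite J" "0 \<le> a" "0 \<le> G"
    and h: "\<And>j k. j \<in> J \<Longrightarrow> k \<in> J \<Longrightarrow> j \<noteq> k \<Longrightarrow> min a (min (c j) (c k)) \<le> G"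
  shows "(\<Sum>j\<in>J. min a (c j)) \<le> a + real (card J) * G"
proof (cases "J = {}")
  case True then show ?thesis using assms by simp
next
  case False
  define d where "d j = min a (c j)" for j
  have "Max (d ` J) \<in> d ` J" using False assms(1) by simp
  then obtain j0 where j0: "j0 \<in> J" "d j0 = Max (d ` J)" by auto
  have mx: "d k \<le> d j0" if "k \<in> J" for k using j0 that assms(1) by simp
  have "(\<Sum>j\<in>J. d j) = d j0 + (\<Sum>j\<in>J-{j0}. d j)"
    using j0 assms(1) by (simp add: sum.remove)
  also have "(\<Sum>j\<in>J-{j0}. d j) \<le> (\<Sum>j\<in>J-{j0}. G)"
  proof (rule sum_mono)
    fix k assume k: "k \<in> J - {j0}"
    have "d k = min a (min (c j0) (c k))" using mx[of k] k unfolding d_def by auto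
    also have "\<dots> \<le> G" using h[of j0 k] k j0 by auto
    finally show "d k \<le> G" .
  qed
  also have "(\<Sum>j\<in>J-{j0}. G) \<le> real (card J) * G"
  proof -
    have "card (J - {j0}) \<le> card J" using assms(1) by (simp add: card_Diff1_le)
    then show ?thesis using assms(3) by (simp add: mult_right_mono)
  qed
  finally show ?thesis unfolding d_def by simp
qed

lemma tbl_lt9: "B < 4 \<Longrightarrow> f < 3 \<Longrightarrow> t \<in> set (tbls!B!f) \<Longrightarrow> t < 9"
  by (simp add: tbls_def less_Suc_eq numeral_eq_Suc) (elim disjE; auto)

lemma meas_nth: "B < 4 \<Longrightarrow> f < 3 \<Longrightarrow> meas B ! f = pr (bsc B) (bv!B!f)"
  using bv_len[of B] by (simp add: meas_def)

theorem mainTheorem3: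
  fixes M :: "'l measure"
    and \<mu> :: "complex ^ 3 \<Rightarrow> 'l \<Rightarrow> real"
    and \<xi> :: "(complex ^ 3 ^ 3) list \<Rightarrow> nat \<Rightarrow> 'l \<Rightarrow> real"
  assumes "reproducing_ontological_model M \<mu> \<xi>"
  shows "(\<forall>k::real. (\<forall>\<psi> \<phi>. pure_state \<psi> \<longrightarrow> pure_state \<phi> \<longrightarrow>
              classical_overlap M (\<mu> \<psi>) (\<mu> \<phi>) \<ge> k * quantum_overlap \<psi> \<phi>)
           \<longrightarrow> k \<le> 95 / 100)
         \<and> \<not> maximally_psi_epistemic M \<mu>"
proof -
  note A = assms[unfolded reproducing_ontological_model_def]
  have A1: "\<mu> \<psi> \<in> borel_measurable M" "\<And>l. l \<in> space M \<Longrightarrow> 0 \<le> \<mu> \<psi> l"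
     "integrable M (\<mu> \<psi>)" "(\<integral>l. \<mu> \<psi> l \<partial>M) = 1" if "pure_state \<psi>" for \<psi>
    using A that by auto
  have A2: "\<xi> Ps f \<in> borel_measurable M" "\<And>l. l \<in> space M \<Longrightarrow> 0 \<le> \<xi> Ps f l"
    if "projective_measurement Ps" "f < length Ps" for Ps f
    using A that by auto
  have A2s: "(\<Sum>f<length Ps. \<xi> Ps f l) = 1" if "projective_measurement Ps" "l \<in> space M" for Ps l
    using A that by auto
  have A3: "(\<integral>l. \<xi> Ps f l * \<mu> \<psi> l \<partial>M) = born \<psi> (Ps ! f)"
    if "pure_state \<psi>" "projective_measurement Ps" "f < length Ps" for \<psi> Ps f
    using A that by auto
  define J where "J = {1..8::nat}"
  have Jt: "t < 9" if "t \<in> J" for t using that unfolding J_def by auto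
  have xi_le1: "\<xi> (meas B) f l \<le> 1" if "B < 4" "f < 3" "l \<in> space M" for B f l
  proof -
    have "\<xi> (meas B) f l \<le> (\<Sum>f<length (meas B). \<xi> (meas B) f l)"
      using that meas_len[of B] meas_pm[of B] A2(2)
      by (intro member_le_sum) auto
    then show ?thesis using A2s[OF meas_pm[OF that(1)] that(3)] by simp
  qed
  have int_xm: "integrable M (\<lambda>l. \<xi> (meas B) f l * \<mu> (s t) l)" if "B < 4" "f < 3" "t < 9" for B f t
  proof (rule Bochner_Integration.integrable_bound[OF A1(3)[OF s_pure[OF that(3)]]])
    show "(\<lambda>l. \<xi> (meas B) f l * \<mu> (s t) l) \<in> borel_measurable M"
      using A2(1)[OF meas_pm[OF that(1)]] A1(1)[OF s_pure[OF that(3)]] meas_len[OF that(1)] that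
      by auto
    show "AE l in M. norm (\<xi> (meas B) f l * \<mu> (s t) l) \<le> norm (\<mu> (s t) l)"
    proof (rule AE_I2)
      fix l assume l: "l \<in> space M"
      have "0 \<le> \<xi> (meas B) f l" using A2(2)[OF meas_pm[OF that(1)] _ l] meas_len[OF that(1)] that by auto
      moreover have "0 \<le> \<mu> (s t) l" using A1(2)[OF s_pure[OF that(3)] l] .
      moreover have "\<xi> (meas B) f l \<le> 1" using xi_le1 that l by auto
      ultimately show "norm (\<xi> (meas B) f l * \<mu> (s t) l) \<le> norm (\<mu> (s t) l)"
        by (simp add: abs_mult mult_left_le_one_le)
    qed
  qed
  have zero: "(\<integral>l. \<xi> (meas B) f l * \<mu> (s t) l \<partial>M) = 0"
    if "B < 4" "f < 3" "t \<in> set (tbls!B!f)" for B f t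
  proof -
    have t9: "t < 9" using tbl_lt9 that by auto
    have "(\<integral>l. \<xi> (meas B) f l * \<mu> (s t) l \<partial>M) = born (s t) (meas B ! f)"
      using A3[OF s_pure[OF t9] meas_pm[OF that(1)]] meas_len[OF that(1)] that by auto
    also have "\<dots> = 0" unfolding meas_nth[OF that(1,2)]
      by (rule pr_born, rule s_orth[OF that])
    finally show ?thesis .
  qed
  define g where "g l = (\<Sum>B<4. \<Sum>f<3. \<Sum>t\<in>set (tbls!B!f). \<xi> (meas B) f l * \<mu> (s t) l)" for l
  have int_g: "integrable M g"
    unfolding g_def using int_xm tbl_lt9 by (intro Bochner_Integration.integrable_sum) auto
  have int_xm': "integrable M (\<lambda>l. \<xi> (meas B) f l * \<mu> (s t) l)"
    if "B < 4" "f < 3" "t \<in> set (tbls!B!f)" for B f t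
    using int_xm tbl_lt9 that by auto
  have l1: "(\<integral>l. (\<Sum>t\<in>set (tbls!B!f). \<xi> (meas B) f l * \<mu> (s t) l) \<partial>M) = 0"
    if "B < 4" "f < 3" for B f
    using int_xm'[OF that] zero[OF that] by (simp add: Bochner_Integration.integral_sum)
  have i1: "integrable M (\<lambda>l. \<Sum>t\<in>set (tbls!B!f). \<xi> (meas B) f l * \<mu> (s t) l)"
    if "B < 4" "f < 3" for B f
    using int_xm'[OF that] by (intro Bochner_Integration.integrable_sum) auto
  have l2: "(\<integral>l. (\<Sum>f<3. \<Sum>t\<in>set (tbls!B!f). \<xi> (meas B) f l * \<mu> (s t) l) \<partial>M) = 0"
    if "B < 4" for B
    using i1[OF that] l1[OF that] by (simp add: Bochner_Integration.integral_sum)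
  have i2: "integrable M (\<lambda>l. \<Sum>f<3. \<Sum>t\<in>set (tbls!B!f). \<xi> (meas B) f l * \<mu> (s t) l)"
    if "B < 4" for B
    using i1[OF that] by (rule Bochner_Integration.integrable_sum) auto
  have int_g0: "(\<integral>l. g l \<partial>M) = 0"
    unfolding g_def
    using i2 l2 by (simp add: Bochner_Integration.integral_sum)
  have nn: "0 \<le> \<xi> (meas B) f l * \<mu> (s t) l" if "B < 4" "f < 3" "t < 9" "l \<in> space M" for B f t l
    using A2(2)[OF meas_pm[OF that(1)] _ that(4)] meas_len[OF that(1)] that
      A1(2)[OF s_pure[OF that(3)] that(4)] by auto
  have g_nn: "0 \<le> g l" if "l \<in> space M" for l
    unfolding g_def using nn that tbl_lt9 by (intro sum_nonneg) auto
  have pw: "min (\<mu> (s 0) l) (min (\<mu> (s j) l) (\<mu> (s k) l)) \<le> g l"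
    if l: "l \<in> space M" and jk: "j \<in> J" "k \<in> J" "j \<noteq> k" for l j k
  proof -
    obtain B where B: "B < 4" "\<forall>f<3. \<exists>t\<in>{0,j,k}. t \<in> set (tbls!B!f)"
      using comb jk unfolding J_def by blast
    define m where "m = min (\<mu> (s 0) l) (min (\<mu> (s j) l) (\<mu> (s k) l))"
    have "m = (\<Sum>f<3. \<xi> (meas B) f l) * m"
      using A2s[OF meas_pm[OF B(1)] l] meas_len[OF B(1)] by simp
    also have "\<dots> = (\<Sum>f<3. \<xi> (meas B) f l * m)" by (simp add: sum_distrib_right)
    also have "\<dots> \<le> (\<Sum>f<3. \<Sum>t\<in>set (tbls!B!f). \<xi> (meas B) f l * \<mu> (s t) l)"
    proof (rule sum_mono)
      fix f assume "f \<in> {..<3::nat}"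
      then have f: "f < 3" by simp
      obtain t where t: "t \<in> {0,j,k}" "t \<in> set (tbls!B!f)" using B(2) f by blast
      have "m \<le> \<mu> (s t) l" using t(1) unfolding m_def by auto
      then have "\<xi> (meas B) f l * m \<le> \<xi> (meas B) f l * \<mu> (s t) l"
        using A2(2)[OF meas_pm[OF B(1)] _ l] meas_len[OF B(1)] f
        by (intro mult_left_mono) auto
      also have "\<dots> \<le> (\<Sum>t\<in>set (tbls!B!f). \<xi> (meas B) f l * \<mu> (s t) l)"
        using t(2) nn[OF B(1) f _ l] tbl_lt9[OF B(1) f]
        by (intro member_le_sum) auto
      finally show "\<xi> (meas B) f l * m \<le> (\<Sum>t\<in>set (tbls!B!f). \<xi> (meas B) f l * \<mu> (s t) l)" .
    qed
    also have "\<dots> \<le> g l"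
      unfolding g_def using B(1) nn l tbl_lt9
      by (intro member_le_sum[where i=B and A="{..<4}"] sum_nonneg) auto
    finally show ?thesis unfolding m_def .
  qed
  have pw2: "(\<Sum>j\<in>J. min (\<mu> (s 0) l) (\<mu> (s j) l)) \<le> \<mu> (s 0) l + 8 * g l"
    if l: "l \<in> space M" for l
  proof -
    have "(\<Sum>j\<in>J. min (\<mu> (s 0) l) (\<mu> (s j) l)) \<le> \<mu> (s 0) l + real (card J) * g l"
      using pw[OF l] g_nn[OF l] A1(2)[OF s_pure l]
      by (intro comb_ineq) (auto simp: J_def)
    then show ?thesis by (simp add: J_def)
  qed
  have sumC: "(\<Sum>j\<in>J. classical_overlap M (\<mu> (s 0)) (\<mu> (s j))) \<le> 1"
  proof -
    have ints: "integrable M (\<lambda>l. min (\<mu> (s 0) l) (\<mu> (s j) l))" if "j \<in> J" for j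
      using A1(3)[OF s_pure] Jt[OF that] by (intro integrable_min) auto
    have "(\<Sum>j\<in>J. classical_overlap M (\<mu> (s 0)) (\<mu> (s j)))
        = (\<integral>l. (\<Sum>j\<in>J. min (\<mu> (s 0) l) (\<mu> (s j) l)) \<partial>M)"
      unfolding classical_overlap_def using ints by (simp add: Bochner_Integration.integral_sum)
    also have "\<dots> \<le> (\<integral>l. \<mu> (s 0) l + 8 * g l \<partial>M)"
      using ints int_g A1(3)[OF s_pure[of 0]] pw2
      by (intro integral_mono Bochner_Integration.integrable_sum integrable_add integrable_mult_right) auto
    also have "\<dots> = 1"
      using int_g int_g0 A1(3,4)[OF s_pure[of 0]] by simp
    finally show ?thesis .
  qed
  have bound: "k \<le> 95/100" if hk: "\<forall>\<psi> \<phi>. pure_state \<psi> \<longrightarrow> pure_state \<phi> \<longrightarrow>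
              classical_overlap M (\<mu> \<psi>) (\<mu> \<phi>) \<ge> k * quantum_overlap \<psi> \<phi>" for k
  proof -
    have "(\<Sum>j\<in>J. k * (1 - sqrt 3 / 2)) \<le> (\<Sum>j\<in>J. classical_overlap M (\<mu> (s 0)) (\<mu> (s j)))"
    proof (rule sum_mono)
      fix j assume j: "j \<in> J"
      show "k * (1 - sqrt 3 / 2) \<le> classical_overlap M (\<mu> (s 0)) (\<mu> (s j))"
      proof -
        have jj: "j \<in> {1..8}" using j unfolding J_def .
        show ?thesis using hk[rule_format, OF s_pure[of 0] s_pure[OF Jt[OF j]]] s_ov[OF jj] by simp
      qed
    qed
    with sumC have "8 * (k * (1 - sqrt 3 / 2)) \<le> 1" by (simp add: J_def)
    moreover have "sqrt 3 < 17321/10000"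
      by (rule real_less_lsqrt) (auto simp: power2_eq_square)
    moreover have "sqrt 3 \<ge> 0" by simp
    ultimately have q1: "8 * (k * (1 - sqrt 3 / 2)) \<le> 1" and q2: "1 - sqrt 3 / 2 > 2679/20000"
      by auto
    show ?thesis
    proof (rule ccontr)
      assume "\<not> k \<le> 95/100"
      then have "k * (1 - sqrt 3 / 2) \<ge> 95/100 * (1 - sqrt 3 / 2)"
        using q2 by (intro mult_right_mono) auto
      moreover have "\<And>x q::real. 8 * x \<le> 1 \<Longrightarrow> 95/100*q \<le> x \<Longrightarrow> 2679/20000 < q \<Longrightarrow> False"
        by linarith
      ultimately show False using q1 q2 by blast
    qed
  qed
  moreover have "\<not> maximally_psi_epistemic M \<mu>"
  proof
    assume "maximally_psi_epistemic M \<mu>"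
    then have "\<forall>\<psi> \<phi>. pure_state \<psi> \<longrightarrow> pure_state \<phi> \<longrightarrow>
              classical_overlap M (\<mu> \<psi>) (\<mu> \<phi>) \<ge> 1 * quantum_overlap \<psi> \<phi>"
      unfolding maximally_psi_epistemic_def by simp
    then have "(1::real) \<le> 95/100" by (rule bound)
    then show False by simp
  qed
  ultimately show ?thesis by blast
qed

end
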